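(* Let $\mathcal{N}$ denote the class of all networks $(X,A_X)$, where $X$ is a finite nonempty set and $A_X:X\times X\to\mathbb{R}$ satisfies $A_X(x,x')\ge 0$ for all $x,x'\in X$, with $A_X(x,x')=0$ if and only if $x=x'$ ($A_X$ need not be symmetric nor satisfy the triangle inequality). For a network $(X,A_X)$ define $\bar A_X(x,x')=\max\big(A_X(x,x'),A_X(x',x)\big)$ and $$u^R_X(x,x')=\min_{C(x,x')}\ \max_{0\le i\le l-1}\bar A_X(x_i,x_{i+1}),$$ where the minimum is over all chains $C(x,x')=[x=x_0,x_1,\dots,x_l=x']$ of nodes of $X$ from $x$ to $x'$. Let $\mathcal{H}^R$ be the method assigning to each network $(X,A_X)$ the function $u^R_X$ on $X\times X$. Then: (i) for every network $(X,A_X)\in\mathcal{N}$, $u^R_X$ is an ultrametric on $X$; and (ii) $\mathcal{H}^R$ satisfies the Axiom of Value (A1) and the Axiom of Transformation (A2).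
   Context: An ultrametric on a finite set $X$ is a function $u_X:X\times X\to\mathbb{R}$ that is nonnegative, symmetric ($u_X(x,x')=u_X(x',x)$), satisfies $u_X(x,x')=0$ iff $x=x'$, and satisfies the strong triangle inequality $u_X(x,x')\le\max\big(u_X(x,x''),u_X(x'',x')\big)$ for all $x,x',x''\in X$. A (hierarchical) clustering method $\mathcal{H}$ is a map assigning to every network $(X,A_X)$ an ultrametric $u_X$ on $X$ (equivalently a dendrogram on $X$; $u_X(x,x')$ is the smallest resolution at which $x,x'$ are clustered together). Axiom of Value (A1): for every two-node network $X=\{p,q\}$ with $A_X(p,q)=\alpha$, $A_X(q,p)=\beta$ (with $\alpha,\beta>0$), the output ultrametric satisfies $u_X(p,q)=\max(\alpha,\beta)$. Axiom of Transformation (A2): for any two networks $(X,A_X)$, $(Y,A_Y)$ and any map $\phi:X\to Y$ with $A_X(x,x')\ge A_Y(\phi(x),\phi(x'))$ for all $x,x'\in X$, the output ultrametrics $u_X=\mathcal{H}(X,A_X)$ and $u_Y=\mathcal{H}(Y,A_Y)$ satisfy $u_X(x,x')\ge u_Y(\phi(x),\phi(x'))$ for all $x,x'\in X$. *)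

theory Defs
  imports Complex_Main
begin

definition is_network :: "'a set \<Rightarrow> ('a \<Rightarrow> 'a \<Rightarrow> real) \<Rightarrow> bool" where
  "is_network X A \<longleftrightarrow> finite X \<and> X \<noteq> {} \<and>
     (\<forall>x\<in>X. \<forall>x'\<in>X. A x x' \<ge> 0 \<and> (A x x' = 0 \<longleftrightarrow> x = x'))"

definition ultrametric :: "'a set \<Rightarrow> ('a \<Rightarrow> 'a \<Rightarrow> real) \<Rightarrow> bool" where
  "ultrametric X u \<longleftrightarrow>
     (\<forall>x\<in>X. \<forall>x'\<in>X. u x x' \<ge> 0) \<and>
     (\<forall>x\<in>X. \<forall>x'\<in>X. u x x' = u x' x) \<and>
     (\<forall>x\<in>X. \<forall>x'\<in>X. u x x' = 0 \<longleftrightarrow> x = x') \<and>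
     (\<forall>x\<in>X. \<forall>x'\<in>X. \<forall>x''\<in>X. u x x' \<le> max (u x x'') (u x'' x'))"

definition sym_max :: "('a \<Rightarrow> 'a \<Rightarrow> real) \<Rightarrow> 'a \<Rightarrow> 'a \<Rightarrow> real" where
  "sym_max A x x' = max (A x x') (A x' x)"

definition is_chain :: "'a set \<Rightarrow> 'a \<Rightarrow> 'a \<Rightarrow> 'a list \<Rightarrow> bool" where
  "is_chain X x x' c \<longleftrightarrow> c \<noteq> [] \<and> hd c = x \<and> last c = x' \<and> set c \<subseteq> X"

definition chain_cost :: "('a \<Rightarrow> 'a \<Rightarrow> real) \<Rightarrow> 'a list \<Rightarrow> real" where
  "chain_cost A c = Max (insert 0 {sym_max A (c ! i) (c ! (i+1)) | i. i + 1 < length c})"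

definition u_R :: "'a set \<Rightarrow> ('a \<Rightarrow> 'a \<Rightarrow> real) \<Rightarrow> 'a \<Rightarrow> 'a \<Rightarrow> real" where
  "u_R X A x x' = Min {chain_cost A c | c. is_chain X x x' c}"

end

theory Submission
  imports Defs
begin

lemma cc_fin: "finite {sym_max A (c ! i) (c ! (i+1)) | i. i + 1 < length c}"
proof -
  have "{sym_max A (c ! i) (c ! (i+1)) | i. i + 1 < length c}
        = (\<lambda>i. sym_max A (c ! i) (c ! (i+1))) ` {i. i < length c - 1}" by auto
  thus ?thesis by simp
qed

lemma cc_single[simp]: "chain_cost A [a] = 0"
  unfolding chain_cost_def by simp

lemma cc_cons2[simp]: "chain_cost A (a # b # r) = max (sym_max A a b) (chain_cost A (b # r))"
proof -
  have eq: "{sym_max A ((a#b#r) ! i) ((a#b#r) ! (i+1)) | i. i + 1 < length (a#b#r)}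
     = insert (sym_max A a b) {sym_max A ((b#r) ! i) ((b#r) ! (i+1)) | i. i + 1 < length (b#r)}"
    (is "?L = insert ?s ?R")
  proof
    show "?L \<subseteq> insert ?s ?R"
    proof
      fix v assume "v \<in> ?L"
      then obtain i where v: "v = sym_max A ((a#b#r) ! i) ((a#b#r) ! (i+1))" "i + 1 < length (a#b#r)" by blast
      show "v \<in> insert ?s ?R"
      proof (cases i)
        case 0 thus ?thesis using v by simp
      next
        case (Suc j) thus ?thesis using v by auto
      qed
    qed
  next
    show "insert ?s ?R \<subseteq> ?L"
    proof
      fix v assume "v \<in> insert ?s ?R"
      thus "v \<in> ?L"
      proof
        assume "v = ?s" thus ?thesis by (auto intro!: exI[of _ 0])
      next
        assume "v \<in> ?R"
        then obtain j where "v = sym_max A ((b#r) ! j) ((b#r) ! (j+1))" "j + 1 < length (b#r)" by blast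
        thus ?thesis by (auto intro!: exI[of _ "Suc j"])
      qed
    qed
  qed
  have "chain_cost A (a # b # r) = Max (insert 0 (insert ?s ?R))" unfolding chain_cost_def eq ..
  also have "\<dots> = Max (insert ?s (insert 0 ?R))" by (simp add: insert_commute)
  also have "\<dots> = max ?s (Max (insert 0 ?R))" using cc_fin[of A "b#r"] by (simp add: Max_insert)
  finally show ?thesis unfolding chain_cost_def by simp
qed

lemma sym_max_comm: "sym_max A a b = sym_max A b a"
  unfolding sym_max_def by simp

lemma cc_nonneg: "c \<noteq> [] \<Longrightarrow> chain_cost A c \<ge> 0"
  by (induction c rule: induct_list012) (auto simp: max_def)

lemma cc_append: "c1 \<noteq> [] \<Longrightarrow> c2 \<noteq> [] \<Longrightarrow>
  chain_cost A (c1 @ c2) = max (chain_cost A c1) (max (sym_max A (last c1) (hd c2)) (chain_cost A c2))"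
proof (induction c1 rule: induct_list012)
  case (2 x)
  then obtain y r where "c2 = y # r" by (cases c2) auto
  then show ?case using cc_nonneg[of c2 A] by (auto simp: max_def)
next
  case (3 x y zs)
  then show ?case by (simp add: max.assoc)
qed auto

lemma cc_rev: "c \<noteq> [] \<Longrightarrow> chain_cost A (rev c) = chain_cost A c"
proof (induction c)
  case (Cons a c)
  show ?case
  proof (cases c)
    case Nil then show ?thesis by simp
  next
    case (Cons b r)
    have "chain_cost A (rev (a # c)) = chain_cost A (rev c @ [a])" by simp
    also have "\<dots> = max (chain_cost A (rev c)) (sym_max A (last (rev c)) a)"
      using Cons cc_append[of "rev c" "[a]" A] cc_nonneg[of "rev c" A] by (auto simp: max_def)
    also have "\<dots> = max (chain_cost A c) (sym_max A a b)"
      using Cons Cons.IH by (simp add: last_rev sym_max_comm)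
    finally show ?thesis using Cons by (simp add: max.commute)
  qed
qed simp

lemma cc_in: "c \<noteq> [] \<Longrightarrow> chain_cost A c \<in> insert 0 ((\<lambda>(a,b). sym_max A a b) ` (set c \<times> set c))"
proof (induction c rule: induct_list012)
  case (3 x y zs)
  show ?case using "3.IH"(2) by (auto simp: max_def)
qed auto

lemma cc_ub: "c \<noteq> [] \<Longrightarrow> set c \<subseteq> X \<Longrightarrow> (\<forall>a\<in>X. \<forall>b\<in>X. sym_max A a b \<le> M) \<Longrightarrow> 0 \<le> M
   \<Longrightarrow> chain_cost A c \<le> M"
  by (induction c rule: induct_list012) auto

lemma cc_lb: "c \<noteq> [] \<Longrightarrow> set c \<subseteq> X \<Longrightarrow> hd c \<noteq> last c \<Longrightarrow>
   \<exists>a\<in>X. \<exists>b\<in>X. a \<noteq> b \<and> sym_max A a b \<le> chain_cost A c"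
proof (induction c rule: induct_list012)
  case (3 x y zs)
  show ?case
  proof (cases "x = y")
    case True
    then obtain a b where "a\<in>X" "b\<in>X" "a\<noteq>b" "sym_max A a b \<le> chain_cost A (y#zs)"
      using "3.IH"(2) "3.prems" by auto
    then show ?thesis by (metis cc_cons2 max.coboundedI2)
  next
    case False
    moreover have "x \<in> X" "y \<in> X" using "3.prems" by auto
    ultimately show ?thesis by (metis cc_cons2 max.cobounded1)
  qed
qed auto

lemma cc_map: "c \<noteq> [] \<Longrightarrow> (\<forall>a\<in>set c. \<forall>b\<in>set c. B (\<phi> a) (\<phi> b) \<le> A a b)
   \<Longrightarrow> chain_cost B (map \<phi> c) \<le> chain_cost A c"
proof (induction c rule: induct_list012)
  case (3 x y zs)
  have "B (\<phi> x) (\<phi> y) \<le> A x y" "B (\<phi> y) (\<phi> x) \<le> A y x" using "3.prems" by auto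
  hence "sym_max B (\<phi> x) (\<phi> y) \<le> sym_max A x y" unfolding sym_max_def by linarith
  moreover have "chain_cost B (map \<phi> (y#zs)) \<le> chain_cost A (y#zs)" using "3.IH"(2) "3.prems" by simp
  ultimately show ?case by (simp add: max.coboundedI1 max.coboundedI2)
qed auto

definition costs where "costs X A x x' = {chain_cost A c | c. is_chain X x x' c}"

lemma costs_fin: "finite X \<Longrightarrow> finite (costs X A x x')"
proof -
  assume f: "finite X"
  have "costs X A x x' \<subseteq> insert 0 ((\<lambda>(a,b). sym_max A a b) ` (X \<times> X))"
  proof
    fix v assume "v \<in> costs X A x x'"
    then obtain c where c: "v = chain_cost A c" "is_chain X x x' c" unfolding costs_def by blast
    then show "v \<in> insert 0 ((\<lambda>(a,b). sym_max A a b) ` (X \<times> X))"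
      using cc_in[of c A] unfolding is_chain_def by blast
  qed
  thus ?thesis using f by (meson finite_SigmaI finite_imageI finite_insert finite_subset)
qed

lemma costs_ne: "x \<in> X \<Longrightarrow> x' \<in> X \<Longrightarrow> costs X A x x' \<noteq> {}"
  unfolding costs_def is_chain_def by (auto intro!: exI[of _ "[x,x']"])

lemma uR_le: "finite X \<Longrightarrow> is_chain X x x' c \<Longrightarrow> u_R X A x x' \<le> chain_cost A c"
  using costs_fin[of X A x x'] unfolding u_R_def costs_def[symmetric]
  by (intro Min_le) (auto simp: costs_def)

lemma uR_ex: "finite X \<Longrightarrow> x \<in> X \<Longrightarrow> x' \<in> X \<Longrightarrow> \<exists>c. is_chain X x x' c \<and> u_R X A x x' = chain_cost A c"
proof -
  assume a: "finite X" "x \<in> X" "x' \<in> X"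
  have "u_R X A x x' \<in> costs X A x x'" unfolding u_R_def costs_def[symmetric]
    using costs_fin[OF a(1)] costs_ne[OF a(2,3)] by (rule Min_in)
  thus ?thesis unfolding costs_def by blast
qed

theorem proposition1:
  shows "(\<forall>(X :: 'a set) A. is_network X A \<longrightarrow> ultrametric X (u_R X A))
    \<and> (\<forall>(p :: 'a) q A \<alpha> \<beta>. p \<noteq> q \<and> \<alpha> > 0 \<and> \<beta> > 0 \<and> A p q = \<alpha> \<and> A q p = \<beta>
           \<and> A p p = 0 \<and> A q q = 0 \<longrightarrow> u_R {p, q} A p q = max \<alpha> \<beta>)
    \<and> (\<forall>(X :: 'a set) (A :: 'a \<Rightarrow> 'a \<Rightarrow> real) (Y :: 'b set) (B :: 'b \<Rightarrow> 'b \<Rightarrow> real) \<phi>.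
          is_network X A \<and> is_network Y B \<and> \<phi> ` X \<subseteq> Y
          \<and> (\<forall>x\<in>X. \<forall>x'\<in>X. A x x' \<ge> B (\<phi> x) (\<phi> x'))
          \<longrightarrow> (\<forall>x\<in>X. \<forall>x'\<in>X. u_R X A x x' \<ge> u_R Y B (\<phi> x) (\<phi> x')))"
proof (intro conjI allI impI)
  fix X :: "'a set" and A
  assume N: "is_network X A"
  hence fin: "finite X" unfolding is_network_def by simp
  show "ultrametric X (u_R X A)"
    unfolding ultrametric_def
  proof (intro conjI ballI)
    fix x x' assume xs: "x \<in> X" "x' \<in> X"
    obtain c where c: "is_chain X x x' c" "u_R X A x x' = chain_cost A c" using uR_ex[OF fin xs, of A] by blast
    have "c \<noteq> []" using c(1) unfolding is_chain_def by simp
    thus "u_R X A x x' \<ge> 0" using cc_nonneg[of c A] c(2) by simp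
  next
    have le: "u_R X A x' x \<le> u_R X A x x'" if xx: "x \<in> X" "x' \<in> X" for x x'
    proof -
      obtain c where c: "is_chain X x x' c" "u_R X A x x' = chain_cost A c" using uR_ex[OF fin xx, of A] by blast
      have "is_chain X x' x (rev c)" using c(1) unfolding is_chain_def by (simp add: hd_rev last_rev)
      hence "u_R X A x' x \<le> chain_cost A (rev c)" by (rule uR_le[OF fin])
      thus ?thesis using c cc_rev[of c A] unfolding is_chain_def by simp
    qed
    fix x x' assume "x \<in> X" "x' \<in> X"
    thus "u_R X A x x' = u_R X A x' x" using le by (meson order_antisym)
  next
    fix x x' assume xs: "x \<in> X" "x' \<in> X"
    show "u_R X A x x' = 0 \<longleftrightarrow> x = x'"
    proof
      assume z: "u_R X A x x' = 0"
      show "x = x'"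
      proof (rule ccontr)
        assume ne: "x \<noteq> x'"
        obtain c where c: "is_chain X x x' c" "u_R X A x x' = chain_cost A c" using uR_ex[OF fin, of x x' A] xs by blast
        then obtain a b where ab: "a\<in>X" "b\<in>X" "a\<noteq>b" "sym_max A a b \<le> chain_cost A c"
          using cc_lb[of c X A] ne unfolding is_chain_def by auto
        have "A a b \<ge> 0" "A a b \<noteq> 0" using N ab unfolding is_network_def by auto
        hence "A a b > 0" by linarith
        hence "sym_max A a b > 0" unfolding sym_max_def by simp
        thus False using ab c z by simp
      qed
    next
      assume "x = x'"
      hence "is_chain X x x' [x]" using xs unfolding is_chain_def by simp
      hence "u_R X A x x' \<le> chain_cost A [x]" by (rule uR_le[OF fin])
      hence "u_R X A x x' \<le> 0" by simp
      moreover obtain c where "is_chain X x x' c" "u_R X A x x' = chain_cost A c" using uR_ex[OF fin, of x x' A] xs by blast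
      moreover have "c \<noteq> []" using \<open>is_chain X x x' c\<close> unfolding is_chain_def by simp
      ultimately show "u_R X A x x' = 0" using cc_nonneg[of c A] by linarith
    qed
  next
    fix x x' x'' assume xs: "x \<in> X" "x' \<in> X" "x'' \<in> X"
    obtain c1 where c1: "is_chain X x x'' c1" "u_R X A x x'' = chain_cost A c1" using uR_ex[OF fin, of x x'' A] xs by blast
    obtain c2 where c2: "is_chain X x'' x' c2" "u_R X A x'' x' = chain_cost A c2" using uR_ex[OF fin, of x'' x' A] xs by blast
    have ch: "is_chain X x x' (c1 @ tl c2)" using c1 c2 unfolding is_chain_def
      by (cases c2) (auto)
    have "chain_cost A (c1 @ tl c2) \<le> max (chain_cost A c1) (chain_cost A c2)"
    proof (cases "tl c2")
      case Nil thus ?thesis by simp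
    next
      case (Cons y r)
      then obtain z where c2e: "c2 = z # y # r" by (cases c2) auto
      have "z = last c1" using c1 c2 c2e unfolding is_chain_def by simp
      thus ?thesis using Cons c2e c1 cc_append[of c1 "tl c2" A] unfolding is_chain_def by simp
    qed
    thus "u_R X A x x' \<le> max (u_R X A x x'') (u_R X A x'' x')"
      using uR_le[OF fin ch, of A] c1 c2 by simp
  qed
next
  fix p q :: 'a and A :: "'a \<Rightarrow> 'a \<Rightarrow> real" and \<alpha> \<beta> :: real
  assume h: "p \<noteq> q \<and> \<alpha> > 0 \<and> \<beta> > 0 \<and> A p q = \<alpha> \<and> A q p = \<beta> \<and> A p p = 0 \<and> A q q = 0"
  have fin: "finite {p,q}" by simp
  have ub: "\<forall>a\<in>{p,q}. \<forall>b\<in>{p,q}. sym_max A a b \<le> max \<alpha> \<beta>" using h unfolding sym_max_def by auto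
  obtain c where c: "is_chain {p,q} p q c" "u_R {p,q} A p q = chain_cost A c" using uR_ex[OF fin, of p q A] by blast
  have "chain_cost A c \<le> max \<alpha> \<beta>" using cc_ub[OF _ _ ub] c h unfolding is_chain_def by auto
  moreover obtain a b where ab: "a\<in>{p,q}" "b\<in>{p,q}" "a\<noteq>b" "sym_max A a b \<le> chain_cost A c"
    using cc_lb[of c "{p,q}" A] c h unfolding is_chain_def by auto
  moreover have "sym_max A a b = max \<alpha> \<beta>"
    using ab h unfolding sym_max_def by (auto simp: max.commute)
  ultimately show "u_R {p, q} A p q = max \<alpha> \<beta>" using c by linarith
next
  fix X :: "'a set" and A :: "'a \<Rightarrow> 'a \<Rightarrow> real" and Y :: "'b set" and B :: "'b \<Rightarrow> 'b \<Rightarrow> real" and \<phi>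
  assume h: "is_network X A \<and> is_network Y B \<and> \<phi> ` X \<subseteq> Y
          \<and> (\<forall>x\<in>X. \<forall>x'\<in>X. A x x' \<ge> B (\<phi> x) (\<phi> x'))"
  hence fX: "finite X" and fY: "finite Y" unfolding is_network_def by auto
  show "\<forall>x\<in>X. \<forall>x'\<in>X. u_R X A x x' \<ge> u_R Y B (\<phi> x) (\<phi> x')"
  proof (intro ballI)
    fix x x' assume xs: "x \<in> X" "x' \<in> X"
    obtain c where c: "is_chain X x x' c" "u_R X A x x' = chain_cost A c" using uR_ex[OF fX xs, of A] by blast
    have "is_chain Y (\<phi> x) (\<phi> x') (map \<phi> c)" using c h unfolding is_chain_def
      by (auto simp: hd_map last_map)
    hence "u_R Y B (\<phi> x) (\<phi> x') \<le> chain_cost B (map \<phi> c)" by (rule uR_le[OF fY])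
    also have "\<dots> \<le> chain_cost A c" using c h unfolding is_chain_def
      by (intro cc_map) auto
    finally show "u_R X A x x' \<ge> u_R Y B (\<phi> x) (\<phi> x')" using c by simp
  qed
qed

end
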